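(* Let $P\in S^n$. Then, with respect to the Pompeiu-Hausdorff metric $h$: (1) the map $\bigcirc_{{\rm Wulff},P}:\mathcal{H}_{\rm Wulff}(S^n,P)\to\mathcal{H}_{\rm Wulff}(S^n,P)$, $W\mapsto W^\circ$, is a well-defined bijective isometry, i.e. $h(W_1^\circ,W_2^\circ)=h(W_1,W_2)$ for all $W_1,W_2\in\mathcal{H}_{\rm Wulff}(S^n,P)$; (2) the map $\overline{\bigcirc_{{\rm Wulff},P}}:\overline{\mathcal{H}_{\rm Wulff}(S^n,P)}\to\overline{\mathcal{H}_{\rm Wulff}(S^n,P)}$, $W\mapsto W^\circ$, is a well-defined bijective isometry, i.e. $h(W_1^\circ,W_2^\circ)=h(W_1,W_2)$ for all $W_1,W_2\in\overline{\mathcal{H}_{\rm Wulff}(S^n,P)}$.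
   Context: $n$ is a positive integer and $S^n$ is the unit sphere in $\mathbb{R}^{n+1}$. For $P,Q\in S^n$, $|PQ|=\arccos(P\cdot Q)$ is the spherical (geodesic) distance; $S^n$ is regarded as a metric space with this distance. For $P\in S^n$, $H(P)=\{Q\in S^n: P\cdot Q\ge 0\}$. For a non-empty $W\subset S^n$, its spherical polar set is $W^\circ=\bigcap_{P\in W}H(P)$. $\mathcal{H}(S^n)$ is the set of non-empty closed subsets of $S^n$ with the Pompeiu-Hausdorff metric $h(A,B)=\max\{\max_{x\in A}\min_{y\in B}|xy|,\ \max_{y\in B}\min_{x\in A}|xy|\}$. A subset $W\subset S^n$ is hemispherical if there is $P\in S^n$ with $W\cap H(P)=\emptyset$. For $P,Q$ in a hemispherical set $W$, the arc $PQ=\{((1-t)P+tQ)/\|(1-t)P+tQ\|: 0\le t\le 1\}$. A hemispherical $W$ is spherical convex if $PQ\subset W$ for all $P,Q\in W$; it is a spherical convex body if it is moreover closed and has an interior point. For $P\in S^n$, $\mathcal{H}_{\rm Wulff}(S^n,P)$ is the set of $W\in\mathcal{H}(S^n)$ such that $W\cap H(-P)=\emptyset$, $P$ is an interior point of $W$, and $W$ is a spherical convex body; $\overline{\mathcal{H}_{\rm Wulff}(S^n,P)}$ is its closure in $(\mathcal{H}(S^n),h)$. *)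

theory Defs
  imports "HOL-Analysis.Analysis"
begin

text \<open>The unit sphere S^n in R^(n+1), modelled in a Euclidean space 'a with DIM('a) = n+1.\<close>
definition sph :: "'a::euclidean_space set" where
  "sph = {x. norm x = 1}"

definition sdist :: "'a::euclidean_space \<Rightarrow> 'a \<Rightarrow> real" where
  "sdist P Q = arccos (P \<bullet> Q)"

definition hemi :: "'a::euclidean_space \<Rightarrow> 'a set" where
  "hemi P = {Q \<in> sph. P \<bullet> Q \<ge> 0}"

definition spolar :: "'a::euclidean_space set \<Rightarrow> 'a set" where
  "spolar W = sph \<inter> (\<Inter>P\<in>W. hemi P)"

definition Hsets :: "'a::euclidean_space set set" where
  "Hsets = {A. A \<subseteq> sph \<and> closed A \<and> A \<noteq> {}}"

text \<open>Pompeiu-Hausdorff distance w.r.t. the spherical distance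
  (for non-empty compact sets the Sup/Inf are attained max/min).\<close>
definition hdist :: "'a::euclidean_space set \<Rightarrow> 'a set \<Rightarrow> real" where
  "hdist A B = max (SUP x\<in>A. INF y\<in>B. sdist x y) (SUP y\<in>B. INF x\<in>A. sdist x y)"

definition hemispherical :: "'a::euclidean_space set \<Rightarrow> bool" where
  "hemispherical W \<longleftrightarrow> W \<subseteq> sph \<and> (\<exists>P\<in>sph. W \<inter> hemi P = {})"

definition sarc :: "'a::euclidean_space \<Rightarrow> 'a \<Rightarrow> 'a set" where
  "sarc P Q = {((1 - t) *\<^sub>R P + t *\<^sub>R Q) /\<^sub>R norm ((1 - t) *\<^sub>R P + t *\<^sub>R Q) | t. 0 \<le> t \<and> t \<le> 1}"

definition sconvex :: "'a::euclidean_space set \<Rightarrow> bool" where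
  "sconvex W \<longleftrightarrow> hemispherical W \<and> (\<forall>P\<in>W. \<forall>Q\<in>W. sarc P Q \<subseteq> W)"

definition sinterior_pt :: "'a::euclidean_space set \<Rightarrow> 'a \<Rightarrow> bool" where
  "sinterior_pt W P \<longleftrightarrow> P \<in> W \<and> (\<exists>e>0. {Q \<in> sph. sdist P Q < e} \<subseteq> W)"

definition sconvex_body :: "'a::euclidean_space set \<Rightarrow> bool" where
  "sconvex_body W \<longleftrightarrow> sconvex W \<and> closed W \<and> (\<exists>P. sinterior_pt W P)"

definition HWulff :: "'a::euclidean_space \<Rightarrow> 'a set set" where
  "HWulff P = {W \<in> Hsets. W \<inter> hemi (- P) = {} \<and> sinterior_pt W P \<and> sconvex_body W}"

definition HWulff_closure :: "'a::euclidean_space \<Rightarrow> 'a set set" where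
  "HWulff_closure P = {W \<in> Hsets. \<forall>e>0. \<exists>V\<in>HWulff P. hdist W V < e}"

end

theory Submission
  imports Defs
begin


lemma sph_iff: "x \<in> sph \<longleftrightarrow> norm x = 1" by (simp add: sph_def)

lemma inner_sph_bounds:
  assumes "x \<in> sph" "y \<in> sph"
  shows "-1 \<le> x \<bullet> y" "x \<bullet> y \<le> 1" "\<bar>x \<bullet> y\<bar> \<le> 1"
proof -
  have "\<bar>x \<bullet> y\<bar> \<le> norm x * norm y" by (rule Cauchy_Schwarz_ineq2)
  then show "\<bar>x \<bullet> y\<bar> \<le> 1" using assms by (simp add: sph_def)
  then show "-1 \<le> x \<bullet> y" "x \<bullet> y \<le> 1" by auto
qed

lemma sdist_bounds:
  assumes "x \<in> sph" "y \<in> sph"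
  shows "0 \<le> sdist x y" "sdist x y \<le> pi"
  using inner_sph_bounds[OF assms] by (auto simp: sdist_def intro: arccos_lbound arccos_ubound)

lemma cos_sdist: "x \<in> sph \<Longrightarrow> y \<in> sph \<Longrightarrow> cos (sdist x y) = x \<bullet> y"
  using inner_sph_bounds[of x y] by (simp add: sdist_def)

lemma inner_self_sph: "x \<in> sph \<Longrightarrow> x \<bullet> x = 1"
  by (simp add: sph_def dot_square_norm)

lemma sdist_sym: "sdist x y = sdist y x"
  by (simp add: sdist_def inner_commute)

lemma sdist_self: "x \<in> sph \<Longrightarrow> sdist x x = 0"
  by (simp add: sdist_def sph_def dot_square_norm)

lemma norm_diff_sph: "x \<in> sph \<Longrightarrow> y \<in> sph \<Longrightarrow> (norm (x - y))\<^sup>2 = 2 - 2 * (x \<bullet> y)"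
  by (simp add: inner_self_sph power2_norm_eq_inner inner_diff_left inner_diff_right inner_commute)

lemma norm_le_sdist:
  assumes "x \<in> sph" "y \<in> sph"
  shows "norm (x - y) \<le> sdist x y"
proof -
  define t where "t = sdist x y"
  have t0: "0 \<le> t" using sdist_bounds[OF assms] by (simp add: t_def)
  have "x \<bullet> y = cos t" using cos_sdist[OF assms] by (simp add: t_def)
  also have "cos t = cos (2 * (t/2))" by simp
  also have "\<dots> = 1 - 2 * sin (t/2) ^ 2" by (rule cos_double_sin)
  finally have e: "(norm (x - y))\<^sup>2 = 4 * sin (t/2) ^ 2" using norm_diff_sph[OF assms] by simp
  have "\<bar>sin (t/2)\<bar> \<le> \<bar>t/2\<bar>" by (rule abs_sin_x_le_abs_x)
  then have "sin (t/2) ^ 2 \<le> (t/2)^2"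
    using abs_le_square_iff by blast
  then have "(norm (x - y))\<^sup>2 \<le> t\<^sup>2" using e by (simp add: power_divide)
  then show ?thesis using t0 unfolding t_def
    using power2_le_imp_le by blast
qed

lemma sdist_triangle:
  assumes x: "x \<in> sph" and y: "y \<in> sph" and z: "z \<in> sph"
  shows "sdist x z \<le> sdist x y + sdist y z"
proof (cases "sdist x y + sdist y z \<ge> pi")
  case True then show ?thesis using sdist_bounds[OF x z] by linarith
next
  case False
  define a where "a = x \<bullet> y"
  define b where "b = y \<bullet> z"
  have ab: "\<bar>a\<bar> \<le> 1" "\<bar>b\<bar> \<le> 1" using inner_sph_bounds x y z a_def b_def by auto
  define u where "u = x - a *\<^sub>R y"
  define v where "v = z - b *\<^sub>R y"
  have yy: "y \<bullet> y = 1" using y by (simp add: sph_def dot_square_norm)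
  have xx: "x \<bullet> x = 1" using x by (simp add: sph_def dot_square_norm)
  have zz: "z \<bullet> z = 1" using z by (simp add: sph_def dot_square_norm)
  have uv: "u \<bullet> v = x \<bullet> z - a * b"
    by (simp add: u_def v_def inner_diff_left inner_diff_right yy a_def b_def inner_commute)
  have "u \<bullet> u = 1 - a\<^sup>2"
    by (simp add: u_def inner_diff_left inner_diff_right yy xx a_def inner_commute power2_eq_square)
  then have uu: "(norm u)\<^sup>2 = 1 - a\<^sup>2" by (simp add: power2_norm_eq_inner)
  have "v \<bullet> v = 1 - b\<^sup>2"
    by (simp add: v_def inner_diff_left inner_diff_right yy zz b_def inner_commute power2_eq_square)
  then have vv: "(norm v)\<^sup>2 = 1 - b\<^sup>2" by (simp add: power2_norm_eq_inner)
  have nu: "norm u = sqrt (1 - a\<^sup>2)" using uu by (metis norm_ge_zero real_sqrt_unique)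
  have nv: "norm v = sqrt (1 - b\<^sup>2)" using vv by (metis norm_ge_zero real_sqrt_unique)
  have "- (norm u * norm v) \<le> u \<bullet> v"
    using Cauchy_Schwarz_ineq2[of u v] by linarith
  then have "- (sqrt (1 - a\<^sup>2) * sqrt (1 - b\<^sup>2)) \<le> x \<bullet> z - a * b" by (simp only: nu nv uv)
  then have ineq: "a * b - sqrt (1 - a\<^sup>2) * sqrt (1 - b\<^sup>2) \<le> x \<bullet> z" by linarith
  have s1: "sdist x y = arccos a" "sdist y z = arccos b" by (simp_all add: sdist_def a_def b_def)
  have "cos (arccos a + arccos b) = a * b - sqrt (1 - a\<^sup>2) * sqrt (1 - b\<^sup>2)"
    using ab by (simp add: cos_add sin_arccos)
  then have c: "cos (sdist x y + sdist y z) \<le> x \<bullet> z" using ineq s1 by simp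
  have r: "0 \<le> sdist x y + sdist y z" "sdist x y + sdist y z \<le> pi"
    using sdist_bounds[OF x y] sdist_bounds[OF y z] False by auto
  have "sdist x z = arccos (x \<bullet> z)" by (simp add: sdist_def)
  also have "\<dots> \<le> arccos (cos (sdist x y + sdist y z))"
    using c inner_sph_bounds[OF x z] by (intro arccos_le_arccos) auto
  also have "\<dots> = sdist x y + sdist y z" using r by (simp add: arccos_cos)
  finally show ?thesis .
qed



definition exc :: "'a::euclidean_space set \<Rightarrow> 'a set \<Rightarrow> real" where
  "exc A B = (SUP x\<in>A. INF y\<in>B. sdist x y)"

lemma hdist_exc: "hdist A B = max (exc A B) (exc B A)"
  by (simp add: hdist_def exc_def sdist_sym)

lemma INF_sdist_bounds:
  assumes "B \<subseteq> sph" "B \<noteq> {}" "x \<in> sph"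
  shows "bdd_below ((\<lambda>y. sdist x y) ` B)" "0 \<le> (INF y\<in>B. sdist x y)" "(INF y\<in>B. sdist x y) \<le> pi"
proof -
  show bb: "bdd_below ((\<lambda>y. sdist x y) ` B)"
    using assms sdist_bounds by (intro bdd_belowI2[of _ 0]) blast
  show "0 \<le> (INF y\<in>B. sdist x y)"
    using assms sdist_bounds by (intro cINF_greatest) blast+
  obtain y where "y \<in> B" using assms by blast
  then show "(INF y\<in>B. sdist x y) \<le> pi"
    using assms sdist_bounds bb by (intro cINF_lower2[of _ _ y]) blast+
qed

lemma exc_le:
  assumes "A \<subseteq> sph" "B \<subseteq> sph" "A \<noteq> {}" "B \<noteq> {}"
    and H: "\<And>x e. x \<in> A \<Longrightarrow> e > 0 \<Longrightarrow> \<exists>y\<in>B. sdist x y < d + e"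
  shows "exc A B \<le> d"
  unfolding exc_def
proof (rule cSUP_least)
  show "A \<noteq> {}" by fact
  fix x assume x: "x \<in> A"
  have xs: "x \<in> sph" using x assms by blast
  show "(INF y\<in>B. sdist x y) \<le> d"
  proof (rule ccontr)
    assume "\<not> ?thesis"
    then have "(INF y\<in>B. sdist x y) - d > 0" by simp
    from H[OF x this] obtain y where y: "y \<in> B" "sdist x y < (INF y\<in>B. sdist x y)" by auto
    have "(INF y\<in>B. sdist x y) \<le> sdist x y"
      using INF_sdist_bounds(1)[OF assms(2,4) xs] y(1) by (rule cINF_lower)
    then show False using y by simp
  qed
qed

lemma exc_approx:
  assumes "A \<subseteq> sph" "B \<subseteq> sph" "B \<noteq> {}" "x \<in> A" "exc A B < d"
  shows "\<exists>y\<in>B. sdist x y < d"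
proof -
  have xs: "x \<in> sph" using assms by blast
  have ba: "bdd_above ((\<lambda>x. INF y\<in>B. sdist x y) ` A)"
    using INF_sdist_bounds(3)[OF assms(2,3)] assms(1) by (intro bdd_aboveI2[where M=pi]) blast
  have "(INF y\<in>B. sdist x y) \<le> exc A B"
    unfolding exc_def using assms(4) ba by (rule cSUP_upper)
  then have "(INF y\<in>B. sdist x y) < d" using assms by simp
  then show ?thesis
    using cINF_less_iff[OF assms(3) INF_sdist_bounds(1)[OF assms(2,3) xs]] by blast
qed

lemma exc_approx2:
  assumes "A \<subseteq> sph" "B \<subseteq> sph" "B \<noteq> {}" "x \<in> A" "e > 0"
  shows "\<exists>y\<in>B. sdist x y < exc A B + e"
  using exc_approx[OF assms(1-4), of "exc A B + e"] assms(5) by simp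

lemma hdist_approx:
  assumes "A \<subseteq> sph" "B \<subseteq> sph" "A \<noteq> {}" "B \<noteq> {}" "hdist A B < d"
  shows "\<forall>x\<in>A. \<exists>y\<in>B. sdist x y < d" "\<forall>y\<in>B. \<exists>x\<in>A. sdist x y < d"
proof -
  have "exc A B < d" "exc B A < d" using assms(5) by (auto simp: hdist_exc)
  then show "\<forall>x\<in>A. \<exists>y\<in>B. sdist x y < d" "\<forall>y\<in>B. \<exists>x\<in>A. sdist x y < d"
    using exc_approx[OF assms(1,2,4)] exc_approx[OF assms(2,1,3)] by (auto simp: sdist_sym)
qed

lemma exc_nonneg:
  assumes "A \<subseteq> sph" "B \<subseteq> sph" "A \<noteq> {}" "B \<noteq> {}"
  shows "0 \<le> exc A B"
proof -
  obtain x where x: "x \<in> A" using assms by blast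
  have ba: "bdd_above ((\<lambda>x. INF y\<in>B. sdist x y) ` A)"
    using INF_sdist_bounds(3)[OF assms(2,4)] assms(1) by (intro bdd_aboveI2[where M=pi]) blast
  have "0 \<le> (INF y\<in>B. sdist x y)" using INF_sdist_bounds(2)[OF assms(2,4)] x assms(1) by blast
  also have "\<dots> \<le> exc A B" unfolding exc_def using x ba by (rule cSUP_upper)
  finally show ?thesis .
qed

lemma spolar_iff: "Q \<in> spolar W \<longleftrightarrow> Q \<in> sph \<and> (\<forall>w\<in>W. 0 \<le> w \<bullet> Q)"
  by (auto simp: spolar_def hemi_def)

lemma spolar_sph: "spolar W \<subseteq> sph" by (auto simp: spolar_iff)

lemma spolar_sub:
  assumes "W \<subseteq> sph" shows "W \<subseteq> spolar (spolar W)"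
proof
  fix x assume x: "x \<in> W"
  have "\<forall>w\<in>spolar W. 0 \<le> w \<bullet> x"
  proof
    fix w assume "w \<in> spolar W"
    then have "0 \<le> x \<bullet> w" using x by (simp add: spolar_iff)
    then show "0 \<le> w \<bullet> x" by (simp add: inner_commute)
  qed
  then show "x \<in> spolar (spolar W)" using x assms by (auto simp: spolar_iff)
qed

lemma spolar_anti: "V \<subseteq> W \<Longrightarrow> spolar W \<subseteq> spolar V"
  unfolding subset_iff spolar_iff by blast

lemma spolar3: "W \<subseteq> sph \<Longrightarrow> spolar (spolar (spolar W)) = spolar W"
  by (meson antisym spolar_anti spolar_sph spolar_sub)

lemma closed_sph: "closed sph"
proof -
  have e: "sph = sphere (0::'a) 1" by (auto simp: sph_def)
  show ?thesis unfolding e by (rule closed_sphere)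
qed

lemma closed_spolar: "closed (spolar W)"
proof -
  have "spolar W = sph \<inter> (\<Inter>w\<in>W. {Q. 0 \<le> w \<bullet> Q})" by (auto simp: spolar_iff)
  moreover have "closed (\<Inter>w\<in>W. {Q. 0 \<le> w \<bullet> Q})"
    by (intro closed_INT) (simp add: closed_halfspace_ge[of 0, simplified])
  ultimately show ?thesis using closed_sph by (metis closed_Int)
qed

lemma key:
  fixes B :: "'a::euclidean_space set"
  assumes bip: "spolar (spolar B) = B" and X: "X \<in> sph"
    and c: "0 \<le> c" "c < 1" and H: "\<And>b. b \<in> B \<Longrightarrow> - c \<le> X \<bullet> b"
  shows "\<exists>Q\<in>spolar B. sqrt (1 - c\<^sup>2) \<le> X \<bullet> Q"
proof -
  define D where "D = {q. \<forall>b\<in>B. 0 \<le> b \<bullet> q}"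
  have "D = (\<Inter>b\<in>B. {q. 0 \<le> b \<bullet> q})" by (auto simp: D_def)
  then have clD: "closed D"
    by (simp add: closed_INT closed_halfspace_ge[of 0, simplified])
  have cvD: "convex D"
    unfolding D_def convex_def by (auto simp: inner_add_right intro!: add_nonneg_nonneg)
  have D0: "0 \<in> D" by (simp add: D_def)
  have Dscale: "\<And>q t. q \<in> D \<Longrightarrow> 0 \<le> t \<Longrightarrow> t *\<^sub>R q \<in> D" by (simp add: D_def)
  have Dadd: "\<And>q q'. q \<in> D \<Longrightarrow> q' \<in> D \<Longrightarrow> q + q' \<in> D"
    by (simp add: D_def inner_add_right)
  define p where "p = closest_point D X"
  have pD: "p \<in> D" unfolding p_def using clD D0 by (auto intro: closest_point_in_set)
  have pmin: "\<forall>z\<in>D. dist X p \<le> dist X z" unfolding p_def using clD D0 closest_point_exists(2) by blast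
  have dot: "\<And>y. y \<in> D \<Longrightarrow> (X - p) \<bullet> (y - p) \<le> 0"
    using any_closest_point_dot[OF cvD clD pD _ pmin] by blast
  define r where "r = X - p"
  have "r \<bullet> (0 - p) \<le> 0" using dot[OF D0] by (simp add: r_def)
  moreover have "r \<bullet> (2 *\<^sub>R p - p) \<le> 0" using dot[OF Dscale[OF pD, of 2]] by (simp add: r_def)
  ultimately have rp: "r \<bullet> p = 0" by (simp add: algebra_simps)
  then have pr: "p \<bullet> r = 0" by (simp add: inner_commute)
  have rq: "\<And>q. q \<in> D \<Longrightarrow> r \<bullet> q \<le> 0"
  proof -
    fix q assume q: "q \<in> D"
    have "(X - p) \<bullet> ((p + q) - p) \<le> 0" by (rule dot[OF Dadd[OF pD q]])
    then show "r \<bullet> q \<le> 0" by (simp add: r_def)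
  qed
  have Xpr: "X = p + r" by (simp add: r_def)
  have one: "1 = p \<bullet> p + r \<bullet> r"
  proof -
    have "1 = X \<bullet> X" using inner_self_sph[OF X] by simp
    also have "\<dots> = p \<bullet> p + r \<bullet> r" unfolding Xpr
      by (simp add: inner_add_left inner_add_right rp pr)
    finally show ?thesis .
  qed
  show ?thesis
  proof (cases "r = 0")
    case True
    then have "X \<in> spolar B" using pD X by (auto simp: spolar_iff D_def Xpr)
    moreover have "sqrt (1 - c\<^sup>2) \<le> X \<bullet> X"
      using inner_self_sph[OF X] c by (simp add: real_sqrt_le_1_iff)
    ultimately show ?thesis by blast
  next
    case False
    define b where "b = - (1 / norm r) *\<^sub>R r"
    have nr: "norm r > 0" using False by simp
    have bs: "b \<in> sph" using nr by (simp add: b_def sph_def)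
    have "b \<in> spolar (spolar B)"
      unfolding spolar_iff
    proof (intro conjI ballI bs)
      fix Q assume "Q \<in> spolar B"
      then have "Q \<in> D" by (auto simp: spolar_iff D_def)
      then have "r \<bullet> Q \<le> 0" by (rule rq)
      then show "0 \<le> Q \<bullet> b" using nr
        by (simp add: b_def inner_commute divide_nonpos_pos)
    qed
    then have "b \<in> B" using bip by simp
    then have hb: "- c \<le> X \<bullet> b" by (rule H)
    have "X \<bullet> b = - norm r"
    proof -
      have "X \<bullet> b = - ((p + r) \<bullet> r) / norm r" by (simp add: b_def Xpr)
      also have "(p + r) \<bullet> r = norm r * norm r"
        by (simp add: inner_add_left pr flip: dot_square_norm power2_eq_square)
      finally show ?thesis using nr by simp
    qed
    then have rc: "norm r \<le> c" using hb by simp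
    have pp: "p \<bullet> p = 1 - (norm r)\<^sup>2" using one by (simp add: dot_square_norm)
    have "(norm r)\<^sup>2 \<le> c\<^sup>2" using rc by (simp add: power_mono)
    then have pge: "1 - c\<^sup>2 \<le> (norm p)\<^sup>2" using pp by (simp add: dot_square_norm)
    have "c\<^sup>2 < 1" using c by (simp add: power_less_one_iff abs_less_iff)
    then have "(norm p)\<^sup>2 > 0" using pge by linarith
    then have np: "norm p > 0" by simp
    define Q where "Q = (1 / norm p) *\<^sub>R p"
    have "Q \<in> D" unfolding Q_def using Dscale[OF pD] np by simp
    moreover have "Q \<in> sph" using np by (simp add: Q_def sph_def)
    ultimately have Qp: "Q \<in> spolar B" by (auto simp: spolar_iff D_def)
    have "X \<bullet> Q = norm p"
    proof -
      have "X \<bullet> Q = (p \<bullet> p + r \<bullet> p) / norm p" by (simp add: Q_def Xpr inner_add_left)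
      then show ?thesis using rp np by (simp add: dot_square_norm power2_eq_square)
    qed
    moreover have "sqrt (1 - c\<^sup>2) \<le> norm p"
      using pge by (metis real_sqrt_le_mono real_sqrt_abs abs_norm_cancel power2_abs)
    ultimately have "sqrt (1 - c\<^sup>2) \<le> X \<bullet> Q" by simp
    then show ?thesis using Qp by blast
  qed
qed



lemma sdist_le_half_pi:
  assumes "x \<in> sph" "y \<in> sph" "0 \<le> x \<bullet> y"
  shows "sdist x y \<le> pi/2"
proof -
  have "arccos (x \<bullet> y) \<le> arccos 0"
    using inner_sph_bounds[OF assms(1,2)] assms(3) by (intro arccos_le_arccos) auto
  then show ?thesis by (simp add: sdist_def)
qed

lemma ineq_point:
  assumes A: "A \<subseteq> sph" and B: "B \<subseteq> sph" and PA: "P \<in> A" and PB: "P \<in> spolar B"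
    and bip: "spolar (spolar B) = B" and d0: "0 \<le> d"
    and hyp: "\<And>b e. b \<in> B \<Longrightarrow> e > 0 \<Longrightarrow> \<exists>a\<in>A. sdist b a < d + e"
    and Q: "Q \<in> spolar A" and e: "e > 0"
  shows "\<exists>Q'\<in>spolar B. sdist Q Q' < d + e"
proof -
  define h where "h = d + e/2"
  have Qs: "Q \<in> sph" using Q by (simp add: spolar_iff)
  have Ps: "P \<in> sph" using PB by (simp add: spolar_iff)
  show ?thesis
  proof (cases "pi/2 \<le> h")
    case True
    have "0 \<le> P \<bullet> Q" using Q PA by (simp add: spolar_iff)
    then have "sdist Q P \<le> pi/2" using Qs Ps by (intro sdist_le_half_pi) (auto simp: inner_commute)
    then have "sdist Q P < d + e" using True e by (simp add: h_def)
    then show ?thesis using PB by blast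
  next
    case False
    have h0: "0 \<le> h" using d0 e by (simp add: h_def)
    have hb: "\<And>b. b \<in> B \<Longrightarrow> - sin h \<le> Q \<bullet> b"
    proof -
      fix b assume b: "b \<in> B"
      then have bs: "b \<in> sph" using B by blast
      obtain a where a: "a \<in> A" "sdist b a < h" using hyp[OF b, of "e/2"] e by (auto simp: h_def)
      have as: "a \<in> sph" using a A by blast
      have "0 \<le> a \<bullet> Q" using Q a by (simp add: spolar_iff)
      then have "sdist Q a \<le> pi/2" using Qs as by (intro sdist_le_half_pi) (auto simp: inner_commute)
      moreover have "sdist Q b \<le> sdist Q a + sdist a b" by (rule sdist_triangle[OF Qs as bs])
      ultimately have lt: "sdist Q b < pi/2 + h" using a(2) by (simp add: sdist_sym)
      have "cos (pi/2 + h) < cos (sdist Q b)"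
        using lt sdist_bounds[OF Qs bs] False h0 by (subst cos_mono_less_eq) auto
      then show "- sin h \<le> Q \<bullet> b" using cos_sdist[OF Qs bs] by (simp add: cos_add)
    qed
    have ch: "0 < cos h" using h0 False by (intro cos_gt_zero_pi) auto
    have sh0: "0 \<le> sin h" using h0 False by (intro sin_ge_zero) auto
    have "0 < (cos h)\<^sup>2" using ch by simp
    then have "(sin h)\<^sup>2 < 1" using sin_cos_squared_add[of h] by linarith
    then have sh1: "sin h < 1" using sh0 by (simp add: power_less_one_iff abs_less_iff)
    obtain Q' where Q': "Q' \<in> spolar B" "sqrt (1 - (sin h)\<^sup>2) \<le> Q \<bullet> Q'"
      using key[OF bip Qs sh0 sh1 hb] by blast
    have "sqrt (1 - (sin h)\<^sup>2) = cos h"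
      using ch by (simp add: cos_squared_eq[symmetric])
    then have cq: "cos h \<le> Q \<bullet> Q'" using Q' by simp
    have Q's: "Q' \<in> sph" using Q' by (simp add: spolar_iff)
    have "sdist Q Q' = arccos (Q \<bullet> Q')" by (simp add: sdist_def)
    also have "\<dots> \<le> arccos (cos h)"
      using cq inner_sph_bounds[OF Qs Q's] cos_ge_minus_one by (intro arccos_le_arccos) auto
    also have "\<dots> = h" using h0 False by (intro arccos_cos) auto
    finally have "sdist Q Q' < d + e" using e by (simp add: h_def)
    then show ?thesis using Q' by blast
  qed
qed

lemma exc_polar:
  assumes A: "A \<subseteq> sph" "A \<noteq> {}" and B: "B \<subseteq> sph" "B \<noteq> {}"
    and PA: "P \<in> A" "P \<in> spolar A" and PB: "P \<in> spolar B"
    and bip: "spolar (spolar B) = B"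
  shows "exc (spolar A) (spolar B) \<le> exc B A"
proof (rule exc_le)
  show "spolar A \<subseteq> sph" "spolar B \<subseteq> sph" by (rule spolar_sph)+
  show "spolar A \<noteq> {}" "spolar B \<noteq> {}" using PA PB by auto
  fix Q e assume "Q \<in> spolar A" "(e::real) > 0"
  then show "\<exists>Q'\<in>spolar B. sdist Q Q' < exc B A + e"
    using ineq_point[OF A(1) B(1) PA(1) PB bip exc_nonneg[OF B(1) A(1) B(2) A(2)]
        exc_approx2[OF B(1) A(1) A(2)]] by blast
qed

definition GP :: "'a::euclidean_space \<Rightarrow> 'a set set" where
  "GP P = {W. W \<subseteq> sph \<and> closed W \<and> P \<in> W \<and> P \<in> spolar W \<and> spolar (spolar W) = W}"

lemma GP_polar:
  assumes "W \<in> GP P" shows "spolar W \<in> GP P"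
proof -
  have W: "W \<subseteq> sph" "closed W" "P \<in> W" "P \<in> spolar W" "spolar (spolar W) = W"
    using assms by (auto simp: GP_def)
  show ?thesis unfolding GP_def
    using W spolar_sph closed_spolar spolar3[OF W(1)] by auto
qed

lemma hdist_polar_le:
  assumes "A \<in> GP P" "B \<in> GP P"
  shows "hdist (spolar A) (spolar B) \<le> hdist A B"
proof -
  have A: "A \<subseteq> sph" "A \<noteq> {}" "P \<in> A" "P \<in> spolar A" "spolar (spolar A) = A"
    using assms by (auto simp: GP_def)
  have B: "B \<subseteq> sph" "B \<noteq> {}" "P \<in> B" "P \<in> spolar B" "spolar (spolar B) = B"
    using assms by (auto simp: GP_def)
  have "exc (spolar A) (spolar B) \<le> exc B A"
    using exc_polar[OF A(1,2) B(1,2) A(3,4) B(4,5)] .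
  moreover have "exc (spolar B) (spolar A) \<le> exc A B"
    using exc_polar[OF B(1,2) A(1,2) B(3,4) A(4,5)] .
  ultimately show ?thesis by (auto simp: hdist_exc)
qed

lemma hdist_polar_GP:
  assumes "A \<in> GP P" "B \<in> GP P"
  shows "hdist (spolar A) (spolar B) = hdist A B"
proof -
  have "hdist (spolar (spolar A)) (spolar (spolar B)) \<le> hdist (spolar A) (spolar B)"
    using hdist_polar_le[OF GP_polar[OF assms(1)] GP_polar[OF assms(2)]] .
  then have "hdist A B \<le> hdist (spolar A) (spolar B)" using assms by (simp add: GP_def)
  then show ?thesis using hdist_polar_le[OF assms] by simp
qed



definition coneof :: "'a::euclidean_space set \<Rightarrow> 'a set" where
  "coneof W = {x. x = 0 \<or> sgn x \<in> W}"

lemma sgn_sph: "x \<in> sph \<Longrightarrow> sgn x = x" by (simp add: sph_def sgn_div_norm)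

lemma sgn_in_sph: "x \<noteq> 0 \<Longrightarrow> sgn x \<in> sph" by (simp add: sph_def norm_sgn)

lemma closed_coneof:
  assumes "closed W" shows "closed (coneof W)"
proof -
  have "open ((- {0}) \<inter> sgn -` (- W))"
    using assms by (intro continuous_open_preimage continuous_intros) auto
  moreover have "coneof W = - ((- {0}) \<inter> sgn -` (- W))" by (auto simp: coneof_def)
  ultimately show ?thesis using closed_Compl by metis
qed

lemma sgn_scale_pos: "0 < t \<Longrightarrow> sgn (t *\<^sub>R (x::'a::real_normed_vector)) = sgn x"
  by (simp add: sgn_div_norm scaleR_scaleR field_simps)

lemma convex_coneof:
  assumes W: "W \<subseteq> sph" and arc: "\<And>w1 w2. w1 \<in> W \<Longrightarrow> w2 \<in> W \<Longrightarrow> sarc w1 w2 \<subseteq> W"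
  shows "convex (coneof W)"
  unfolding convex_def
proof (intro ballI allI impI)
  fix x y and u v :: real
  assume x: "x \<in> coneof W" and y: "y \<in> coneof W" and uv: "0 \<le> u" "0 \<le> v" "u + v = 1"
  define z where "z = u *\<^sub>R x + v *\<^sub>R y"
  show "u *\<^sub>R x + v *\<^sub>R y \<in> coneof W"
  proof (cases "z = 0")
    case True then show ?thesis by (simp add: coneof_def z_def)
  next
    case zn: False
    show ?thesis
    proof (cases "x = 0")
      case True
      then have "z = v *\<^sub>R y" by (simp add: z_def)
      then have "v \<noteq> 0" "y \<noteq> 0" using zn by auto
      then have "sgn z = sgn y" using uv \<open>z = v *\<^sub>R y\<close> by (simp add: sgn_scale_pos)
      then show ?thesis using y \<open>y \<noteq> 0\<close> by (simp add: coneof_def z_def[symmetric])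
    next
      case xn: False
      show ?thesis
      proof (cases "y = 0")
        case True
        then have "z = u *\<^sub>R x" by (simp add: z_def)
        then have "u \<noteq> 0" using zn by auto
        then have "sgn z = sgn x" using uv \<open>z = u *\<^sub>R x\<close> by (simp add: sgn_scale_pos)
        then show ?thesis using x xn by (simp add: coneof_def z_def[symmetric])
      next
        case yn: False
        define w1 where "w1 = sgn x"
        define w2 where "w2 = sgn y"
        have w: "w1 \<in> W" "w2 \<in> W" using x y xn yn by (auto simp: coneof_def w1_def w2_def)
        define l where "l = u * norm x + v * norm y"
        have l: "0 < l"
        proof -
          have "0 < u \<or> 0 < v" using uv by auto
          then show ?thesis using uv xn yn unfolding l_def
            by (auto intro: add_pos_nonneg add_nonneg_pos)
        qed
        define t where "t = v * norm y / l"
        have t: "0 \<le> t" "t \<le> 1"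
          using l uv by (auto simp: t_def l_def divide_le_eq)
        have "1 - t = u * norm x / l" using l by (simp add: t_def l_def field_simps)
        then have c1: "(1 - t) *\<^sub>R w1 = (u / l) *\<^sub>R x"
          using xn l by (simp add: w1_def sgn_div_norm scaleR_scaleR field_simps)
        have c2: "t *\<^sub>R w2 = (v / l) *\<^sub>R y"
          using yn l by (simp add: w2_def t_def sgn_div_norm scaleR_scaleR field_simps)
        have comb: "(1 - t) *\<^sub>R w1 + t *\<^sub>R w2 = (1 / l) *\<^sub>R z"
          unfolding c1 c2 z_def by (simp add: scaleR_add_right scaleR_scaleR)
        have "sgn ((1 / l) *\<^sub>R z) = sgn z" using l by (simp add: sgn_scale_pos)
        then have "((1 - t) *\<^sub>R w1 + t *\<^sub>R w2) /\<^sub>R norm ((1 - t) *\<^sub>R w1 + t *\<^sub>R w2) = sgn z"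
          by (simp add: comb sgn_div_norm)
        moreover have "((1 - t) *\<^sub>R w1 + t *\<^sub>R w2) /\<^sub>R norm ((1 - t) *\<^sub>R w1 + t *\<^sub>R w2) \<in> sarc w1 w2"
          unfolding sarc_def using t by blast
        ultimately have "sgn z \<in> W" using arc[OF w] by auto
        then show ?thesis by (simp add: coneof_def z_def)
      qed
    qed
  qed
qed

lemma bipolar:
  assumes W: "W \<subseteq> sph" "closed W" and cv: "convex (coneof W)"
  shows "spolar (spolar W) = W"
proof
  show "W \<subseteq> spolar (spolar W)" by (rule spolar_sub[OF W(1)])
  show "spolar (spolar W) \<subseteq> W"
  proof
    fix X assume X: "X \<in> spolar (spolar W)"
    then have Xs: "X \<in> sph" by (simp add: spolar_iff)
    show "X \<in> W"
    proof (rule ccontr)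
      assume XW: "X \<notin> W"
      have Xn: "X \<noteq> 0" using Xs by (auto simp: sph_def)
      have "X \<notin> coneof W" using XW Xn sgn_sph[OF Xs] by (simp add: coneof_def)
      then obtain a b where ab: "a \<bullet> X < b" "\<forall>k\<in>coneof W. b < a \<bullet> k"
        using separating_hyperplane_closed_point[OF cv closed_coneof[OF W(2)]] by blast
      have b0: "b < 0" using ab(2) by (auto simp: coneof_def)
      have aw: "0 \<le> a \<bullet> w" if w: "w \<in> W" for w
      proof (rule ccontr)
        assume "\<not> 0 \<le> a \<bullet> w"
        then have neg: "a \<bullet> w < 0" by simp
        define t where "t = b / (a \<bullet> w)"
        have t: "0 < t" using neg b0 by (simp add: t_def divide_neg_neg)
        have "w \<in> sph" using w W by blast
        then have "sgn (t *\<^sub>R w) = w" using t by (simp add: sgn_scale_pos sgn_sph)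
        then have "t *\<^sub>R w \<in> coneof W" using w by (simp add: coneof_def)
        then have "b < a \<bullet> (t *\<^sub>R w)" using ab(2) by blast
        also have "a \<bullet> (t *\<^sub>R w) = b" using neg by (simp add: t_def)
        finally show False by simp
      qed
      have an: "a \<noteq> 0" using ab(1) b0 by auto
      define q where "q = sgn a"
      have "q \<in> spolar W"
        unfolding spolar_iff
      proof
        show "q \<in> sph" using an by (simp add: q_def sgn_in_sph)
        show "\<forall>w\<in>W. 0 \<le> w \<bullet> q"
          using aw an by (simp add: q_def sgn_div_norm inner_commute)
      qed
      then have "0 \<le> q \<bullet> X" using X by (simp add: spolar_iff)
      then have "0 \<le> a \<bullet> X" using an by (simp add: q_def sgn_div_norm zero_le_mult_iff)
      then show False using ab(1) b0 by simp
    qed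
  qed
qed



lemma HWulff_facts:
  assumes "W \<in> HWulff P"
  shows "W \<subseteq> sph" "closed W" "W \<noteq> {}" "P \<in> W" "\<And>w. w \<in> W \<Longrightarrow> 0 < w \<bullet> P"
    "\<exists>e>0. \<forall>Q\<in>sph. sdist P Q < e \<longrightarrow> Q \<in> W"
    "\<And>w1 w2. w1 \<in> W \<Longrightarrow> w2 \<in> W \<Longrightarrow> sarc w1 w2 \<subseteq> W"
proof -
  have H: "W \<subseteq> sph" "closed W" "W \<noteq> {}" "W \<inter> hemi (- P) = {}" "sinterior_pt W P" "sconvex_body W"
    using assms by (auto simp: HWulff_def Hsets_def)
  show "W \<subseteq> sph" "closed W" "W \<noteq> {}" using H by auto
  show "P \<in> W" using H(5) by (simp add: sinterior_pt_def)
  show "\<exists>e>0. \<forall>Q\<in>sph. sdist P Q < e \<longrightarrow> Q \<in> W" using H(5) by (auto simp: sinterior_pt_def)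
  show "\<And>w1 w2. w1 \<in> W \<Longrightarrow> w2 \<in> W \<Longrightarrow> sarc w1 w2 \<subseteq> W"
    using H(6) by (auto simp: sconvex_body_def sconvex_def)
  fix w assume w: "w \<in> W"
  show "0 < w \<bullet> P"
  proof (rule ccontr)
    assume "\<not> 0 < w \<bullet> P"
    then have "w \<in> hemi (- P)" using w H(1) by (auto simp: hemi_def inner_commute)
    then show False using w H(4) by blast
  qed
qed

lemma HWulff_GP:
  assumes "W \<in> HWulff P" "P \<in> sph"
  shows "W \<in> GP P"
proof -
  note F = HWulff_facts[OF assms(1)]
  have "spolar (spolar W) = W"
    by (rule bipolar[OF F(1,2) convex_coneof[OF F(1) F(7)]])
  moreover have "P \<in> spolar W" using F(5) assms(2) by (auto simp: spolar_iff less_imp_le)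
  ultimately show ?thesis using F by (simp add: GP_def)
qed

lemma spolar_HWulff:
  assumes W: "W \<in> HWulff P" and Ps: "P \<in> sph"
  shows "spolar W \<in> HWulff P"
proof -
  note F = HWulff_facts[OF W]
  define V where "V = spolar W"
  have Vs: "V \<subseteq> sph" by (simp add: V_def spolar_sph)
  have PV: "P \<in> V" using F(5) Ps by (auto simp: V_def spolar_iff less_imp_le)
  have pos: "0 < Q \<bullet> P" if Q: "Q \<in> V" for Q
  proof -
    have Qs: "Q \<in> sph" using Q Vs by blast
    have ge: "0 \<le> P \<bullet> Q" using Q F(4) by (simp add: V_def spolar_iff)
    show ?thesis
    proof (rule ccontr)
      assume "\<not> 0 < Q \<bullet> P"
      then have QP: "Q \<bullet> P = 0" using ge by (simp add: inner_commute)
      obtain e where e: "e > 0" "\<forall>R\<in>sph. sdist P R < e \<longrightarrow> R \<in> W" using F(6) by blast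
      define t where "t = min e 1 / 2"
      have t: "0 < t" "t < e" "t < pi" using e pi_gt3 by (auto simp: t_def)
      define R where "R = cos t *\<^sub>R P - sin t *\<^sub>R Q"
      have PP: "P \<bullet> P = 1" by (rule inner_self_sph[OF Ps])
      have QQ: "Q \<bullet> Q = 1" by (rule inner_self_sph[OF Qs])
      have PQ: "P \<bullet> Q = 0" using QP by (simp add: inner_commute)
      have "R \<bullet> R = (cos t)\<^sup>2 + (sin t)\<^sup>2"
        by (simp add: R_def inner_diff_left inner_diff_right PP QQ PQ QP power2_eq_square)
      then have "R \<bullet> R = 1" by simp
      then have Rs: "R \<in> sph" by (simp add: sph_def norm_eq_sqrt_inner)
      have "P \<bullet> R = cos t" by (simp add: R_def inner_diff_right PP PQ)
      then have "sdist P R = t" using t by (simp add: sdist_def arccos_cos)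
      then have "R \<in> W" using e(2) Rs t by auto
      then have "0 \<le> R \<bullet> Q" using Q by (simp add: V_def spolar_iff)
      moreover have "R \<bullet> Q = - sin t" by (simp add: R_def inner_diff_left QQ QP PQ)
      moreover have "0 < sin t" using t by (intro sin_gt_zero) auto
      ultimately show False by simp
    qed
  qed
  have hemiV: "V \<inter> hemi (- P) = {}"
    using pos by (force simp: hemi_def inner_commute)
  have cW: "compact W" using F(1,2)
    by (simp add: compact_eq_bounded_closed) (rule bounded_subset[of "cball 0 1"], auto simp: sph_def)
  have "continuous_on W (\<lambda>w. w \<bullet> P)" by (intro continuous_intros)
  then obtain w0 where w0: "w0 \<in> W" "\<forall>w\<in>W. w0 \<bullet> P \<le> w \<bullet> P"
    using continuous_attains_inf[OF cW F(3), of "\<lambda>w. w \<bullet> P"] by blast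
  define m where "m = w0 \<bullet> P"
  have m: "0 < m" using F(5)[OF w0(1)] by (simp add: m_def)
  have intV: "sinterior_pt V P"
    unfolding sinterior_pt_def
  proof (intro conjI exI[of _ m] PV m subsetI)
    fix Q assume "Q \<in> {Q \<in> sph. sdist P Q < m}"
    then have Q: "Q \<in> sph" "sdist P Q < m" by auto
    have nq: "norm (Q - P) < m" using norm_le_sdist[OF Q(1) Ps] Q(2) by (simp add: sdist_sym)
    have "\<forall>w\<in>W. 0 \<le> w \<bullet> Q"
    proof
      fix w assume w: "w \<in> W"
      have nw: "norm w = 1" using w F(1) by (auto simp: sph_def)
      have "\<bar>w \<bullet> (Q - P)\<bar> \<le> norm w * norm (Q - P)" by (rule Cauchy_Schwarz_ineq2)
      then have "\<bar>w \<bullet> (Q - P)\<bar> < m" using nq nw by simp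
      moreover have "m \<le> w \<bullet> P" using w0(2) w by (simp add: m_def)
      moreover have "w \<bullet> Q = w \<bullet> P + w \<bullet> (Q - P)" by (simp add: inner_diff_right)
      ultimately show "0 \<le> w \<bullet> Q" by linarith
    qed
    then show "Q \<in> V" using Q(1) by (simp add: V_def spolar_iff)
  qed
  have arcV: "sarc Q1 Q2 \<subseteq> V" if Q: "Q1 \<in> V" "Q2 \<in> V" for Q1 Q2
  proof
    fix y assume "y \<in> sarc Q1 Q2"
    then obtain t where t: "0 \<le> t" "t \<le> 1"
      and y: "y = ((1 - t) *\<^sub>R Q1 + t *\<^sub>R Q2) /\<^sub>R norm ((1 - t) *\<^sub>R Q1 + t *\<^sub>R Q2)"
      unfolding sarc_def by blast
    define v where "v = (1 - t) *\<^sub>R Q1 + t *\<^sub>R Q2"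
    have "0 < v \<bullet> P"
    proof -
      have "v \<bullet> P = (1 - t) * (Q1 \<bullet> P) + t * (Q2 \<bullet> P)" by (simp add: v_def inner_add_left)
      moreover have "0 < Q1 \<bullet> P" "0 < Q2 \<bullet> P" using pos Q by auto
      ultimately show ?thesis using t
        by (cases "t = 0") (auto intro: add_nonneg_pos add_pos_nonneg)
    qed
    then have vn: "v \<noteq> 0" by auto
    have ys: "y \<in> sph" using vn by (simp add: y v_def[symmetric] sph_def)
    have "\<forall>w\<in>W. 0 \<le> w \<bullet> y"
    proof
      fix w assume w: "w \<in> W"
      have "0 \<le> w \<bullet> Q1" "0 \<le> w \<bullet> Q2" using Q w by (auto simp: V_def spolar_iff)
      then have "0 \<le> w \<bullet> v" using t by (simp add: v_def inner_add_right)
      then show "0 \<le> w \<bullet> y" by (simp add: y v_def[symmetric])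
    qed
    then show "y \<in> V" using ys by (simp add: V_def spolar_iff)
  qed
  have mPs: "- P \<in> sph" using Ps by (simp add: sph_def)
  have "sconvex V" unfolding sconvex_def hemispherical_def
    using Vs hemiV mPs arcV by blast
  moreover have "closed V" by (simp add: V_def closed_spolar)
  ultimately have "sconvex_body V" using intV by (auto simp: sconvex_body_def)
  then have "V \<in> HWulff P"
    using Vs PV hemiV intV \<open>closed V\<close> by (auto simp: HWulff_def Hsets_def)
  then show ?thesis by (simp add: V_def)
qed



lemma norm_sgn_diff:
  fixes a b :: "'a::real_normed_vector"
  assumes "a \<noteq> 0" "b \<noteq> 0"
  shows "norm (sgn a - sgn b) \<le> 2 * norm (a - b) / norm b"
proof -
  define na nb where "na = norm a" and "nb = norm b"
  have na: "0 < na" and nb: "0 < nb" using assms by (auto simp: na_def nb_def)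
  have sa: "sgn a = (1/na) *\<^sub>R a" "sgn b = (1/nb) *\<^sub>R b"
    by (simp_all add: sgn_div_norm na_def nb_def divide_inverse)
  have eq: "sgn a - sgn b = (1/nb) *\<^sub>R (a - b) + (1/na - 1/nb) *\<^sub>R a"
    unfolding sa scaleR_diff_right scaleR_diff_left by simp
  have n1: "norm ((1/nb) *\<^sub>R (a - b)) = norm (a - b) / nb" using nb by simp
  have "norm ((1/na - 1/nb) *\<^sub>R a) = \<bar>1/na - 1/nb\<bar> * na" by (simp add: na_def)
  also have "\<dots> = \<bar>(nb - na) / (na * nb)\<bar> * na" using na nb by (simp add: diff_divide_distrib)
  also have "\<dots> = \<bar>nb - na\<bar> / nb" using na nb by (simp add: abs_mult)
  also have "\<dots> \<le> norm (a - b) / nb"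
    using nb norm_triangle_ineq3[of b a] by (intro divide_right_mono) (auto simp: na_def nb_def norm_minus_commute)
  finally have n2: "norm ((1/na - 1/nb) *\<^sub>R a) \<le> norm (a - b) / nb" .
  have "norm (sgn a - sgn b) \<le> norm ((1/nb) *\<^sub>R (a - b)) + norm ((1/na - 1/nb) *\<^sub>R a)"
    unfolding eq by (rule norm_triangle_ineq)
  also have "\<dots> \<le> norm (a - b) / nb + norm (a - b) / nb" using n1 n2 by linarith
  also have "\<dots> = 2 * norm (a - b) / nb" by simp
  finally show ?thesis by (simp add: nb_def)
qed

lemma approx_cone:
  assumes W: "W \<subseteq> sph" and V: "V \<subseteq> sph"
    and ap: "\<forall>w\<in>W. \<exists>v\<in>V. sdist w v < e" and x: "x \<in> coneof W"
  shows "\<exists>x'\<in>coneof V. norm (x' - x) \<le> e * norm x"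
proof (cases "x = 0")
  case True then show ?thesis by (auto simp: coneof_def)
next
  case False
  then have w: "sgn x \<in> W" using x by (simp add: coneof_def)
  then obtain v where v: "v \<in> V" "sdist (sgn x) v < e" using ap by blast
  have vs: "v \<in> sph" using v V by blast
  have nd: "norm (sgn x - v) < e" using norm_le_sdist[OF _ vs, of "sgn x"] w W v(2) by auto
  define x' where "x' = norm x *\<^sub>R v"
  have "sgn x' = v" using False by (simp add: x'_def sgn_scale_pos sgn_sph[OF vs])
  then have xV: "x' \<in> coneof V" using v by (simp add: coneof_def)
  have "x' - x = norm x *\<^sub>R (v - sgn x)"
    using False by (simp add: x'_def sgn_div_norm scaleR_diff_right)
  then have eqn: "norm (x' - x) = norm x * norm (sgn x - v)" by (simp add: norm_minus_commute)
  have "norm x * norm (sgn x - v) \<le> norm x * e"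
    using nd by (intro mult_left_mono) auto
  then have "norm (x' - x) \<le> e * norm x" using eqn by (simp add: mult.commute)
  then show ?thesis using xV by blast
qed

lemma cl_approx:
  assumes "W \<in> HWulff_closure P" "e > 0"
  shows "\<exists>V\<in>HWulff P. (\<forall>x\<in>W. \<exists>y\<in>V. sdist x y < e) \<and> (\<forall>y\<in>V. \<exists>x\<in>W. sdist x y < e)"
proof -
  have W: "W \<subseteq> sph" "W \<noteq> {}" using assms by (auto simp: HWulff_closure_def Hsets_def)
  obtain V where V: "V \<in> HWulff P" "hdist W V < e" using assms by (auto simp: HWulff_closure_def)
  note F = HWulff_facts[OF V(1)]
  show ?thesis using hdist_approx[OF W(1) F(1) W(2) F(3) V(2)] V(1) by blast
qed

lemma cl_GP:
  assumes Wc: "W \<in> HWulff_closure P" and Ps: "P \<in> sph"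
  shows "W \<in> GP P"
proof -
  have W: "W \<subseteq> sph" "closed W" "W \<noteq> {}" using Wc by (auto simp: HWulff_closure_def Hsets_def)
  have PW: "P \<in> W"
  proof -
    have "\<forall>e>0. \<exists>y\<in>W. dist y P < e"
    proof (intro allI impI)
      fix e :: real assume e: "e > 0"
      obtain V where V: "V \<in> HWulff P" "\<forall>y\<in>V. \<exists>x\<in>W. sdist x y < e" using cl_approx[OF Wc e] by blast
      obtain x where x: "x \<in> W" "sdist x P < e" using V(2) HWulff_facts(4)[OF V(1)] by blast
      have "dist x P \<le> sdist x P" using norm_le_sdist[OF _ Ps, of x] x W by (auto simp: dist_norm)
      then show "\<exists>y\<in>W. dist y P < e" using x by force
    qed
    then show ?thesis using closed_approachable[OF W(2)] by blast
  qed
  have nonneg: "0 \<le> w \<bullet> P" if w: "w \<in> W" for w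
  proof (rule ccontr)
    assume "\<not> 0 \<le> w \<bullet> P"
    then have e: "- (w \<bullet> P) > 0" by simp
    obtain V where V: "V \<in> HWulff P" "\<forall>x\<in>W. \<exists>y\<in>V. sdist x y < - (w \<bullet> P)" using cl_approx[OF Wc e] by blast
    obtain v where v: "v \<in> V" "sdist w v < - (w \<bullet> P)" using V(2) w by blast
    have vs: "v \<in> sph" using v HWulff_facts(1)[OF V(1)] by blast
    have ws: "w \<in> sph" using w W by blast
    have nd: "norm (w - v) < - (w \<bullet> P)" using norm_le_sdist[OF ws vs] v(2) by simp
    have "\<bar>(w - v) \<bullet> P\<bar> \<le> norm (w - v) * norm P" by (rule Cauchy_Schwarz_ineq2)
    then have "\<bar>(w - v) \<bullet> P\<bar> < - (w \<bullet> P)" using nd Ps by (simp add: sph_def)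
    moreover have "0 < v \<bullet> P" using HWulff_facts(5)[OF V(1) v(1)] .
    moreover have "w \<bullet> P = v \<bullet> P + (w - v) \<bullet> P" by (simp add: inner_diff_left)
    ultimately show False by linarith
  qed
  have PpW: "P \<in> spolar W" using nonneg Ps by (simp add: spolar_iff)
  have cv: "convex (coneof W)"
    unfolding convex_def
  proof (intro ballI allI impI)
    fix x y and u v :: real
    assume x: "x \<in> coneof W" and y: "y \<in> coneof W" and uv: "0 \<le> u" "0 \<le> v" "u + v = 1"
    define z where "z = u *\<^sub>R x + v *\<^sub>R y"
    show "u *\<^sub>R x + v *\<^sub>R y \<in> coneof W"
    proof (cases "z = 0")
      case True then show ?thesis by (simp add: coneof_def z_def)
    next
      case zn: False
      define M where "M = norm x + norm y"
      define nz where "nz = norm z"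
      have nz: "0 < nz" using zn by (simp add: nz_def)
      have M0: "0 \<le> M" by (simp add: M_def)
      have "sgn z \<in> W"
      proof -
        have "\<forall>e>0. \<exists>w\<in>W. dist w (sgn z) < e"
        proof (intro allI impI)
          fix e :: real assume e: "e > 0"
          define d where "d = min (e/2) (min (e * nz / (4 * (M + 1))) (nz / (2 * (M + 1))))"
          have d0: "0 < d" using e nz M0 by (simp add: d_def)
          have d1: "d \<le> e/2" unfolding d_def by (rule min.cobounded1)
          have d2: "d \<le> e * nz / (4 * (M + 1))" unfolding d_def by (meson min.cobounded1 min.cobounded2 order.trans)
          have d3: "d \<le> nz / (2 * (M + 1))" unfolding d_def by (meson min.cobounded2 order.trans)
          obtain V where V: "V \<in> HWulff P" "\<forall>x\<in>W. \<exists>y\<in>V. sdist x y < d" "\<forall>y\<in>V. \<exists>x\<in>W. sdist x y < d"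
            using cl_approx[OF Wc d0] by blast
          note FV = HWulff_facts[OF V(1)]
          have cvV: "convex (coneof V)" by (rule convex_coneof[OF FV(1) FV(7)])
          obtain x' where x': "x' \<in> coneof V" "norm (x' - x) \<le> d * norm x"
            using approx_cone[OF W(1) FV(1) V(2) x] by blast
          obtain y' where y': "y' \<in> coneof V" "norm (y' - y) \<le> d * norm y"
            using approx_cone[OF W(1) FV(1) V(2) y] by blast
          define z' where "z' = u *\<^sub>R x' + v *\<^sub>R y'"
          have z'V: "z' \<in> coneof V" using cvV x'(1) y'(1) uv unfolding convex_def z'_def by blast
          have "z' - z = u *\<^sub>R (x' - x) + v *\<^sub>R (y' - y)"
            by (simp add: z'_def z_def algebra_simps)
          then have "norm (z' - z) \<le> norm (u *\<^sub>R (x' - x)) + norm (v *\<^sub>R (y' - y))"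
            by (simp only: norm_triangle_ineq)
          also have "\<dots> = u * norm (x' - x) + v * norm (y' - y)" using uv by simp
          finally have "norm (z' - z) \<le> u * norm (x' - x) + v * norm (y' - y)" .
          also have "\<dots> \<le> 1 * (d * norm x) + 1 * (d * norm y)"
            using uv x'(2) y'(2) by (intro add_mono mult_mono) auto
          finally have zz: "norm (z' - z) \<le> d * M" by (simp add: M_def algebra_simps)
          have dM: "d * M < nz / 2"
          proof -
            have "d * (M + 1) \<le> nz / (2 * (M + 1)) * (M + 1)" using d3 M0 by (intro mult_right_mono) auto
            also have "\<dots> = nz / 2" using M0 by (simp add: field_simps)
            finally have a: "d * (M + 1) \<le> nz / 2" .
            have b: "d * M < d * (M + 1)" using d0 by simp
            show ?thesis using b a by (rule less_le_trans)
          qed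
          have z'n: "z' \<noteq> 0"
          proof
            assume "z' = 0"
            then have "norm (z' - z) = nz" by (simp add: nz_def)
            then show False using zz dM nz by simp
          qed
          then have sV: "sgn z' \<in> V" using z'V by (simp add: coneof_def)
          have sd: "norm (sgn z' - sgn z) \<le> 2 * (d * M) / nz"
          proof -
            have "norm (sgn z' - sgn z) \<le> 2 * norm (z' - z) / norm z" by (rule norm_sgn_diff[OF z'n zn])
            also have "\<dots> \<le> 2 * (d * M) / nz" using zz nz by (simp add: nz_def divide_right_mono)
            finally show ?thesis .
          qed
          have "2 * (d * M) / nz \<le> e / 2"
          proof -
            have "d * M \<le> d * (M + 1)" using d0 by simp
            also have "\<dots> \<le> e * nz / (4 * (M + 1)) * (M + 1)" using d2 M0 by (intro mult_right_mono) auto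
            also have "\<dots> = e * nz / 4" using M0 by (simp add: field_simps)
            finally have "d * M \<le> e * nz / 4" .
            then show ?thesis using nz by (simp add: field_simps)
          qed
          then have sd2: "norm (sgn z' - sgn z) \<le> e / 2" using sd by simp
          obtain w where w: "w \<in> W" "sdist w (sgn z') < d" using V(3) sV by blast
          have "norm (w - sgn z') \<le> sdist w (sgn z')"
            using w(1) W(1) FV(1) sV by (intro norm_le_sdist) auto
          then have "norm (w - sgn z') < e / 2" using w(2) d1 by simp
          then have "dist w (sgn z) < e"
            using sd2 norm_triangle_ineq[of "w - sgn z'" "sgn z' - sgn z"] by (simp add: dist_norm)
          then show "\<exists>w\<in>W. dist w (sgn z) < e" using w(1) by blast
        qed
        then show ?thesis using closed_approachable[OF W(2)] by blast
      qed
      then show ?thesis using zn by (simp add: coneof_def z_def)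
    qed
  qed
  have "spolar (spolar W) = W" by (rule bipolar[OF W(1,2) cv])
  then show ?thesis using W PW PpW by (simp add: GP_def)
qed

lemma spolar_cl:
  assumes Wc: "W \<in> HWulff_closure P" and Ps: "P \<in> sph"
  shows "spolar W \<in> HWulff_closure P"
proof -
  have G: "W \<in> GP P" by (rule cl_GP[OF Wc Ps])
  have PW: "P \<in> spolar W" using G by (simp add: GP_def)
  have H: "spolar W \<in> Hsets" using PW by (auto simp: Hsets_def spolar_sph closed_spolar)
  have "\<forall>e>0. \<exists>V\<in>HWulff P. hdist (spolar W) V < e"
  proof (intro allI impI)
    fix e :: real assume "e > 0"
    then obtain V where V: "V \<in> HWulff P" "hdist W V < e" using Wc by (auto simp: HWulff_closure_def)
    have "hdist (spolar W) (spolar V) = hdist W V"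
      by (rule hdist_polar_GP[OF G HWulff_GP[OF V(1) Ps]])
    then have "hdist (spolar W) (spolar V) < e" using V(2) by simp
    then show "\<exists>V\<in>HWulff P. hdist (spolar W) V < e"
      using spolar_HWulff[OF V(1) Ps] by blast
  qed
  then show ?thesis using H by (simp add: HWulff_closure_def)
qed



lemma bij_part:
  assumes sub: "\<And>W. W \<in> S \<Longrightarrow> spolar W \<in> S" and bip: "\<And>W. W \<in> S \<Longrightarrow> spolar (spolar W) = W"
  shows "bij_betw spolar S S"
  unfolding bij_betw_def
proof
  show "inj_on spolar S"
    by (rule inj_onI) (metis bip)
  show "spolar ` S = S"
  proof
    show "spolar ` S \<subseteq> S" using sub by blast
    show "S \<subseteq> spolar ` S"
    proof
      fix W assume "W \<in> S"
      then have "W = spolar (spolar W)" "spolar W \<in> S" using bip sub by auto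
      then show "W \<in> spolar ` S" by blast
    qed
  qed
qed

theorem theorem1:
  fixes P :: "'a::euclidean_space"
  assumes "DIM('a) \<ge> 2"
    and "P \<in> sph"
  shows "bij_betw spolar (HWulff P) (HWulff P)
         \<and> (\<forall>W1\<in>HWulff P. \<forall>W2\<in>HWulff P. hdist (spolar W1) (spolar W2) = hdist W1 W2)
         \<and> bij_betw spolar (HWulff_closure P) (HWulff_closure P)
         \<and> (\<forall>W1\<in>HWulff_closure P. \<forall>W2\<in>HWulff_closure P.
               hdist (spolar W1) (spolar W2) = hdist W1 W2)"
proof (intro conjI ballI)
  show "bij_betw spolar (HWulff P) (HWulff P)"
    using spolar_HWulff[OF _ assms(2)] HWulff_GP[OF _ assms(2)]
    by (intro bij_part) (auto simp: GP_def)
  show "bij_betw spolar (HWulff_closure P) (HWulff_closure P)"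
    using spolar_cl[OF _ assms(2)] cl_GP[OF _ assms(2)]
    by (intro bij_part) (auto simp: GP_def)
  fix W1 W2
  show "W1 \<in> HWulff P \<Longrightarrow> W2 \<in> HWulff P \<Longrightarrow> hdist (spolar W1) (spolar W2) = hdist W1 W2"
    using HWulff_GP[OF _ assms(2)] hdist_polar_GP by blast
  show "W1 \<in> HWulff_closure P \<Longrightarrow> W2 \<in> HWulff_closure P \<Longrightarrow> hdist (spolar W1) (spolar W2) = hdist W1 W2"
    using cl_GP[OF _ assms(2)] hdist_polar_GP by blast
qed

end
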